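(* In the model described in the context, define for $x\in(0,\tfrac12)$ $$\alpha_x^*=\frac{\kappa_x[s^*(x)]}{\kappa_x[s^*(x)]+1},$$ and for $x\in(\tfrac12,1)$ $$\alpha_x^*=\frac{\kappa_x[s^*(x)]+1}{\kappa_x[s^*(x)]},$$ where $\kappa_x(s)=\dfrac{xF_0(s)-(1-x)F_1(s)}{1-2x}$. Then $\alpha_x^*$ is increasing in $x$ on $(0,\tfrac12)$ and decreasing in $x$ on $(\tfrac12,1)$.
   Context: Model. In state $\theta\in\{0,1\}$ a voter's informative signal $s\in\mathbb{R}$ is drawn from a cdf $F_\theta$ with density $f_\theta$ having full support on $\mathbb{R}$, where $f_0(0)=f_1(0)$ and the likelihood ratio $m(s)=f_1(s)/f_0(s)$ is strictly increasing in $s$. For $x\in(0,1)$ let $s^*(x)=m^{-1}\!\left(\frac{x}{1-x}\right)$. (In the paper's model, $\alpha_x^*$ is the sender-optimal mass of trolls targeting voters of type $x$: the probability that such a voter observes a message from a troll farm instead of her informative signal.) *)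

theory Defs
  imports "HOL-Analysis.Analysis"
begin

definition lik_ratio :: "(real \<Rightarrow> real) \<Rightarrow> (real \<Rightarrow> real) \<Rightarrow> real \<Rightarrow> real" where
  "lik_ratio f0 f1 s = f1 s / f0 s"

definition sstar :: "(real \<Rightarrow> real) \<Rightarrow> (real \<Rightarrow> real) \<Rightarrow> real \<Rightarrow> real" where
  "sstar f0 f1 x = (THE s. lik_ratio f0 f1 s = x / (1 - x))"

definition kappa :: "(real \<Rightarrow> real) \<Rightarrow> (real \<Rightarrow> real) \<Rightarrow> real \<Rightarrow> real \<Rightarrow> real" where
  "kappa F0 F1 x s = (x * F0 s - (1 - x) * F1 s) / (1 - 2 * x)"

text \<open>alpha*_x; the value at x = 1/2 (not defined in the paper) is irrelevant.\<close>
definition alpha_star ::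
  "(real \<Rightarrow> real) \<Rightarrow> (real \<Rightarrow> real) \<Rightarrow> (real \<Rightarrow> real) \<Rightarrow> (real \<Rightarrow> real) \<Rightarrow> real \<Rightarrow> real" where
  "alpha_star F0 F1 f0 f1 x =
     (let k = kappa F0 F1 x (sstar f0 f1 x) in
      if x < 1/2 then k / (k + 1) else (k + 1) / k)"

end

theory Submission
  imports Defs
begin

lemma pos_int:
  fixes g :: "real \<Rightarrow> real"
  assumes hi: "(g has_integral I) {a<..b}" and ab: "a < b"
    and nn: "\<And>t. t \<in> {a<..b} \<Longrightarrow> 0 \<le> g t"
    and pos: "\<And>t. t \<in> {a<..<b} \<Longrightarrow> 0 < g t"
  shows "0 < I"
proof -
  have I0: "0 \<le> I" using has_integral_nonneg[OF hi] nn by blast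
  have abs: "g absolutely_integrable_on {a<..b}"
    using nonnegative_absolutely_integrable_1[of g "{a<..b}"] hi nn by blast
  have S: "{a<..b} \<in> sets lebesgue" by simp
  have int: "integrable (lebesgue_on {a<..b}) g"
    using abs S by (simp add: integrable_restrict_space set_integrable_def)
  have eq: "integral\<^sup>L (lebesgue_on {a<..b}) g = I"
    using lebesgue_integral_eq_integral[OF int S] hi by (simp add: integral_unique)
  show ?thesis
  proof (rule ccontr)
    assume "\<not> 0 < I"
    then have "I = 0" using I0 by simp
    then have "AE x in lebesgue_on {a<..b}. g x = 0"
      using integral_nonneg_eq_0_iff_AE[OF int] eq nn
      by (metis AE_I2 space_restrict_space2 S)
    then obtain N where N: "{x \<in> space (lebesgue_on {a<..b}). \<not> g x = 0} \<subseteq> N"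
      "emeasure (lebesgue_on {a<..b}) N = 0" "N \<in> sets (lebesgue_on {a<..b})"
      by (rule AE_E)
    have sub: "{a<..<b} \<subseteq> N" using N(1) pos S by (force simp: space_restrict_space2)
    have "emeasure (lebesgue_on {a<..b}) {a<..<b} \<le> emeasure (lebesgue_on {a<..b}) N"
      by (rule emeasure_mono[OF sub N(3)])
    moreover have "emeasure (lebesgue_on {a<..b}) {a<..<b} = ennreal (b - a)"
      using ab S by (subst emeasure_restrict_space) (auto simp: Int_absorb2)
    ultimately show False using ab N(2) by simp
  qed
qed

lemma diff_int:
  fixes g :: "real \<Rightarrow> real"
  assumes Hint: "\<And>s. (g has_integral H s) {..s}" and ab: "a \<le> b"
  shows "(g has_integral (H b - H a)) {a<..b}"
proof -
  have 1: "((\<lambda>t. if t \<in> {..b} then g t else 0) has_integral H b) UNIV"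
    using Hint has_integral_restrict_UNIV by blast
  have 2: "((\<lambda>t. if t \<in> {..a} then g t else 0) has_integral H a) UNIV"
    using Hint has_integral_restrict_UNIV by blast
  have "((\<lambda>t. (if t \<in> {..b} then g t else 0) - (if t \<in> {..a} then g t else 0)) has_integral (H b - H a)) UNIV"
    by (rule has_integral_diff[OF 1 2])
  moreover have "(\<lambda>t. (if t \<in> {..b} then g t else 0) - (if t \<in> {..a} then g t else 0))
      = (\<lambda>t. if t \<in> {a<..b} then g t else 0)"
    using ab by (auto simp: fun_eq_iff)
  ultimately show ?thesis using has_integral_restrict_UNIV by metis
qed

lemma tail_int:
  fixes g :: "real \<Rightarrow> real"
  assumes Hint: "\<And>s. (g has_integral H s) {..s}" and T: "(g has_integral T) UNIV"
  shows "(g has_integral (T - H s)) {s<..}"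
proof -
  have 2: "((\<lambda>t. if t \<in> {..s} then g t else 0) has_integral H s) UNIV"
    using Hint has_integral_restrict_UNIV by blast
  have "((\<lambda>t. g t - (if t \<in> {..s} then g t else 0)) has_integral (T - H s)) UNIV"
    by (rule has_integral_diff[OF T 2])
  moreover have "(\<lambda>t. g t - (if t \<in> {..s} then g t else 0))
      = (\<lambda>t. if t \<in> {s<..} then g t else 0)"
    by (auto simp: fun_eq_iff)
  ultimately show ?thesis using has_integral_restrict_UNIV by metis
qed

lemma shape:
  fixes g :: "real \<Rightarrow> real"
  assumes Hint: "\<And>s. (g has_integral H s) {..s}" and T: "(g has_integral T) UNIV"
    and gp: "\<And>t. t < c \<Longrightarrow> 0 < g t" and gn: "\<And>t. c < t \<Longrightarrow> g t < 0" and gc: "g c = 0"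
  shows "\<And>s. s \<le> c \<Longrightarrow> 0 < H s" and "\<And>s. H s \<le> H c" and "\<And>s. c < s \<Longrightarrow> T < H s"
proof -
  fix s :: real assume sc: "s \<le> c"
  have "0 \<le> H (s - 1)"
    using has_integral_nonneg[OF Hint[of "s-1"]] gp sc by (simp add: less_imp_le)
  moreover have "0 < H s - H (s - 1)"
    by (rule pos_int[OF diff_int[OF Hint]]) (use gp gc sc in \<open>auto intro: less_imp_le simp: le_less\<close>)
  ultimately show "0 < H s" by simp
next
  fix s :: real
  show "H s \<le> H c"
  proof (cases "s \<le> c")
    case True
    have "0 \<le> H c - H s"
      by (rule has_integral_nonneg[OF diff_int[OF Hint True]]) (use gp gc in \<open>auto simp: le_less\<close>)
    then show ?thesis by simp
  next
    case False
    then have "c \<le> s" by simp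
    have "0 \<le> - (H s - H c)"
      by (rule has_integral_nonneg[OF has_integral_neg[OF diff_int[OF Hint \<open>c \<le> s\<close>]]])
        (use gn in \<open>auto simp: less_imp_le\<close>)
    then show ?thesis by simp
  qed
next
  fix s :: real assume cs: "c < s"
  have "0 \<le> - (T - H (s + 1))"
    by (rule has_integral_nonneg[OF has_integral_neg[OF tail_int[OF Hint T]]])
      (use gn cs in \<open>auto simp: less_imp_le\<close>)
  moreover have "0 < - (H (s + 1) - H s)"
    by (rule pos_int[OF has_integral_neg[OF diff_int[OF Hint]]]) (use gn cs in \<open>auto simp: less_imp_le\<close>)
  ultimately show "T < H s" by simp
qed

lemma sstar_prop:
  fixes f0 f1 :: "real \<Rightarrow> real"
  assumes mlrp: "strict_mono (lik_ratio f0 f1)"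
    and onto: "\<And>y. y > 0 \<Longrightarrow> \<exists>s. lik_ratio f0 f1 s = y"
    and x: "0 < x" "x < 1"
  shows "lik_ratio f0 f1 (sstar f0 f1 x) = x / (1 - x)"
proof -
  obtain s where s: "lik_ratio f0 f1 s = x / (1 - x)" using onto x by force
  have "(THE s. lik_ratio f0 f1 s = x / (1 - x)) = s"
    by (rule the_equality[where P="\<lambda>s. lik_ratio f0 f1 s = x / (1 - x)", OF s]) (metis s mlrp strict_mono_eq)
  then show ?thesis using s by (simp add: sstar_def)
qed

lemma sign_g:
  fixes f0 f1 :: "real \<Rightarrow> real"
  assumes supp0: "\<And>s. f0 s > 0" and mlrp: "strict_mono (lik_ratio f0 f1)"
    and c: "lik_ratio f0 f1 c = x / (1 - x)" and x: "0 < x" "x < 1"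
  shows "\<And>t. t < c \<Longrightarrow> 0 < x * f0 t - (1 - x) * f1 t"
    and "\<And>t. c < t \<Longrightarrow> x * f0 t - (1 - x) * f1 t < 0"
    and "x * f0 c - (1 - x) * f1 c = 0"
proof -
  fix t assume "t < c"
  then have "f1 t / f0 t < x / (1 - x)" using mlrp c by (metis lik_ratio_def strict_monoD)
  then have "f1 t * (1 - x) < x * f0 t" using supp0[of t] x by (simp add: field_simps)
  then show "0 < x * f0 t - (1 - x) * f1 t" by (simp add: algebra_simps)
next
  fix t assume "c < t"
  then have "x / (1 - x) < f1 t / f0 t" using mlrp c by (metis lik_ratio_def strict_monoD)
  then have "x * f0 t < f1 t * (1 - x)" using supp0[of t] x by (simp add: field_simps)
  then show "x * f0 t - (1 - x) * f1 t < 0" by (simp add: algebra_simps)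
next
  have "f1 c / f0 c = x / (1 - x)" using c by (simp add: lik_ratio_def)
  then have "f1 c * (1 - x) = x * f0 c" using supp0[of c] x by (simp add: field_simps)
  then show "x * f0 c - (1 - x) * f1 c = 0" by (simp add: algebra_simps)
qed

theorem corollary1:
  fixes F0 F1 f0 f1 :: "real \<Rightarrow> real"
  assumes dens0: "\<And>s. (f0 has_integral F0 s) {..s}"
    and dens1: "\<And>s. (f1 has_integral F1 s) {..s}"
    and tot0: "(f0 has_integral 1) UNIV"
    and tot1: "(f1 has_integral 1) UNIV"
    and supp0: "\<And>s. f0 s > 0"
    and supp1: "\<And>s. f1 s > 0"
    and eq0: "f0 0 = f1 0"
    and mlrp: "strict_mono (lik_ratio f0 f1)"
    and onto: "\<And>y. y > 0 \<Longrightarrow> \<exists>s. lik_ratio f0 f1 s = y"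
  shows "(\<forall>x y. 0 < x \<and> x < y \<and> y < 1/2 \<longrightarrow>
            alpha_star F0 F1 f0 f1 x < alpha_star F0 F1 f0 f1 y)
       \<and> (\<forall>x y. 1/2 < x \<and> x < y \<and> y < 1 \<longrightarrow>
            alpha_star F0 F1 f0 f1 y < alpha_star F0 F1 f0 f1 x)"
proof -
  define S where "S = sstar f0 f1"
  define H where "H = (\<lambda>x s. x * F0 s - (1 - x) * F1 s)"
  have Hint: "((\<lambda>t. x * f0 t - (1 - x) * f1 t) has_integral H x s) {..s}" for x s
    unfolding H_def by (intro has_integral_diff has_integral_mult_right dens0 dens1)
  have Tint: "((\<lambda>t. x * f0 t - (1 - x) * f1 t) has_integral (x * 1 - (1 - x) * 1)) UNIV" for x
    by (intro has_integral_diff has_integral_mult_right tot0 tot1)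
  have Hmax: "H x s \<le> H x (S x)" and Hpos: "0 < H x (S x)" if x: "0 < x" "x < 1" for x s
  proof -
    have c: "lik_ratio f0 f1 (S x) = x / (1 - x)"
      unfolding S_def by (rule sstar_prop[OF mlrp onto x])
    have gp: "\<And>t. t < S x \<Longrightarrow> 0 < x * f0 t - (1 - x) * f1 t"
      using sign_g(1)[OF supp0 mlrp c x] by blast
    have gn: "\<And>t. S x < t \<Longrightarrow> x * f0 t - (1 - x) * f1 t < 0"
      using sign_g(2)[OF supp0 mlrp c x] by blast
    have gc: "x * f0 (S x) - (1 - x) * f1 (S x) = 0"
      using sign_g(3)[OF supp0 mlrp c x] by blast
    show "H x s \<le> H x (S x)" by (rule shape(2)[OF Hint Tint gp gn gc])
    show "0 < H x (S x)" by (rule shape(1)[OF Hint Tint gp gn gc order_refl])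
  qed
  have FD: "F1 s < F0 s" for s
  proof -
    have c: "lik_ratio f0 f1 0 = (1/2) / (1 - 1/2)" using eq0 supp0[of 0] by (simp add: lik_ratio_def)
    have gp: "\<And>t. t < 0 \<Longrightarrow> 0 < (1/2) * f0 t - (1 - 1/2) * f1 t"
      using sign_g(1)[OF supp0 mlrp c] by simp
    have gn: "\<And>t. 0 < t \<Longrightarrow> (1/2) * f0 t - (1 - 1/2) * f1 t < 0"
      using sign_g(2)[OF supp0 mlrp c] by simp
    have gc: "(1/2) * f0 0 - (1 - 1/2) * f1 (0::real) = 0"
      using sign_g(3)[OF supp0 mlrp c] by simp
    have T0: "(1/2::real) * 1 - (1 - 1/2) * 1 = 0" by simp
    note sh = shape[OF Hint[of "1/2"] Tint[of "1/2", unfolded T0] gp gn gc]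
    have "0 < H (1/2) s"
      by (cases "s \<le> 0") (auto intro: sh(1) sh(3))
    then show ?thesis by (simp add: H_def algebra_simps)
  qed
  have kH: "kappa F0 F1 x s = H x s / (1 - 2 * x)" for x s
    by (simp add: kappa_def H_def)
  have kmono: "kappa F0 F1 x s < kappa F0 F1 y s"
    if "x < y" "0 < (1 - 2 * x) * (1 - 2 * y)" for x y s
  proof -
    have nx: "1 - 2 * x \<noteq> 0" and ny: "1 - 2 * y \<noteq> 0" using that(2) by auto
    have "kappa F0 F1 y s - kappa F0 F1 x s
        = (y - x) * (F0 s - F1 s) / ((1 - 2 * x) * (1 - 2 * y))"
      unfolding kappa_def using nx ny by (simp add: field_simps)
    moreover have "0 < (y - x) * (F0 s - F1 s) / ((1 - 2 * x) * (1 - 2 * y))"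
      using that FD[of s] by simp
    ultimately show ?thesis by simp
  qed
  have alpha_lo: "alpha_star F0 F1 f0 f1 x = kappa F0 F1 x (S x) / (kappa F0 F1 x (S x) + 1)"
    if "x < 1/2" for x using that by (simp add: alpha_star_def S_def Let_def)
  have alpha_hi: "alpha_star F0 F1 f0 f1 x = (kappa F0 F1 x (S x) + 1) / kappa F0 F1 x (S x)"
    if "1/2 < x" for x using that by (simp add: alpha_star_def S_def Let_def)
  show ?thesis
  proof (intro conjI allI impI)
    fix x y :: real assume a: "0 < x \<and> x < y \<and> y < 1/2"
    let ?kx = "kappa F0 F1 x (S x)" and ?ky = "kappa F0 F1 y (S y)"
    have kx0: "0 < ?kx" using Hpos[of x] a by (simp add: kH)
    have "?kx < kappa F0 F1 y (S x)" by (rule kmono) (use a in auto)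
    also have "\<dots> \<le> ?ky" using Hmax[of y "S x"] a by (simp add: kH divide_right_mono)
    finally have lt: "?kx < ?ky" .
    have "?kx / (?kx + 1) < ?ky / (?ky + 1)"
      using kx0 lt by (simp add: field_simps)
    then show "alpha_star F0 F1 f0 f1 x < alpha_star F0 F1 f0 f1 y"
      using a by (simp add: alpha_lo)
  next
    fix x y :: real assume a: "1/2 < x \<and> x < y \<and> y < 1"
    let ?kx = "kappa F0 F1 x (S x)" and ?ky = "kappa F0 F1 y (S y)"
    have ky0: "?ky < 0" using Hpos[of y] a by (simp add: kH divide_pos_neg)
    have "?kx \<le> kappa F0 F1 x (S y)"
      using Hmax[of x "S y"] a by (simp add: kH divide_right_mono_neg)
    also have "\<dots> < ?ky" by (rule kmono) (use a in \<open>auto intro: mult_neg_neg\<close>)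
    finally have lt: "?kx < ?ky" .
    have "(?ky + 1) / ?ky < (?kx + 1) / ?kx"
      using ky0 lt by (simp add: field_simps)
    then show "alpha_star F0 F1 f0 f1 y < alpha_star F0 F1 f0 f1 x"
      using a by (simp add: alpha_hi)
  qed
qed

end
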